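(* Let $V$ be a fixed real-valued score function, $X_1,\dots,X_{n+1}\in\mathbb R^p$, calibration scores $V_1\le V_2\le\dots\le V_n$ (indexed in increasing order), and $H:\mathbb R^p\times\mathbb R^p\to[0,1]$ a localizer with $H(x,x)=1$; put $H_{ij}=H(X_i,X_j)$ and $p^H_{ij}=H_{ij}/\sum_{k=1}^{n+1}H_{ik}$. For $v\in\mathbb R\cup\{\pm\infty\}$ let $\hat{\mathcal F}_i(v)=\sum_{j=1}^{n}p^H_{ij}\delta_{V_j}+p^H_{i,n+1}\delta_v$, and $\hat{\mathcal F}=\sum_{j=1}^np^H_{n+1,j}\delta_{V_j}+p^H_{n+1,n+1}\delta_{+\infty}$. Fix $\alpha\in(0,1)$, let $\Gamma=\{\sum_{k\in I}p^H_{ik}: i\in\{1,\dots,n+1\},\ I\subseteq\{1,\dots,n+1\}\}$, and for each $v$ let $\tilde\alpha(v)$ be the smallest $\tilde\alpha\in\Gamma$ with $\frac{1}{n+1}\sum_{i=1}^{n+1}\mathbb 1\{V_i\le Q(\tilde\alpha;\hat{\mathcal F}_i(v))\}\ge\alpha$ (with $V_{n+1}=v$ in this sum); set $C_V(X_{n+1})=\{v: v\le Q(\tilde\alpha(v);\hat{\mathcal F})\}$. Let $\overline V_0=-\infty$, $\overline V_i=V_i$ for $1\le i\le n$, $\overline V_{n+1}=+\infty$. For $i=1,\dots,n+1$ let $\ell(i)=\max\{i'\in\{1,\dots,n\}: V_{i'}<\overline V_i\}$ (with $\max\emptyset=0$), $\theta_i=\sum_{j=1}^{\ell(i)}p^H_{ij}$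 and $\tilde\theta_i=\sum_{j=1}^{\ell(i)}p^H_{n+1,j}$ (both $0$ if $\ell(i)=0$). For $k=1,\dots,n+1$ let $$S(k)=\frac{1}{n+1}\sum_{i=1}^{n}\mathbb 1\{V_i\le Q(\tilde\theta_k;\hat{\mathcal F}_i(\overline V_{\ell(k)}))\}.$$ Then: 1. If $k^*$ is the largest index $k\in\{1,\dots,n+1\}$ with $S(k)<\alpha$, then $\{v: v\le\overline V_{k^*}\}$ is the closure of $C_V(X_{n+1})$. 2. Partition the calibration indices $\{1,\dots,n\}$ into $A_1=\{i:p^H_{i,n+1}+\theta_i<\tilde\theta_i\}$, $A_2=\{i:\theta_i\ge\tilde\theta_i\}$, $A_3=\{i: p^H_{i,n+1}+\theta_i\ge\tilde\theta_i,\ \theta_i<\tilde\theta_i\}$. Then for every $k=1,\dots,n+1$, $$S(k)=\frac{1}{n+1}\Big(\sum_{i\in A_1}\mathbb 1\{\theta_i+p^H_{i,n+1}<\tilde\theta_k\}+\sum_{i\in A_2}\mathbb 1\{\theta_i<\tilde\theta_k\}+\sum_{i\in A_3}\mathbb 1\{\ell(i)<\ell(k)\}\Big).$$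
   Context: For a distribution $\mathcal F$ on $\mathbb R\cup\{\pm\infty\}$, $Q(\alpha;\mathcal F)=\inf\{t:\mathbb P_{T\sim\mathcal F}(T\le t)\ge\alpha\}$; $\delta_v$ is the point mass at $v$. *)

theory Defs
  imports "HOL-Analysis.Analysis"
begin

definition pH :: "nat \<Rightarrow> (real^'p \<Rightarrow> real^'p \<Rightarrow> real) \<Rightarrow> (nat \<Rightarrow> real^'p) \<Rightarrow> nat \<Rightarrow> nat \<Rightarrow> real" where
  "pH n H X i j = H (X i) (X j) / (\<Sum>k=1..n+1. H (X i) (X k))"

text \<open>Distributions on the extended reals are represented by their CDF
  t \<mapsto> P(T \<le> t); the quantile Q(alpha; F) = inf {t. P(T \<le> t) \<ge> alpha}.\<close>
definition quantile :: "real \<Rightarrow> (ereal \<Rightarrow> real) \<Rightarrow> ereal" where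
  "quantile a F = Inf {t. F t \<ge> a}"

definition delta_cdf :: "ereal \<Rightarrow> ereal \<Rightarrow> real" where
  "delta_cdf v t = (if v \<le> t then 1 else 0)"

definition Fi :: "nat \<Rightarrow> (nat \<Rightarrow> real) \<Rightarrow> (nat \<Rightarrow> nat \<Rightarrow> real) \<Rightarrow> nat \<Rightarrow> ereal \<Rightarrow> ereal \<Rightarrow> real" where
  "Fi n V p i v = (\<lambda>t. (\<Sum>j=1..n. p i j * delta_cdf (ereal (V j)) t) + p i (n+1) * delta_cdf v t)"

definition Fhat :: "nat \<Rightarrow> (nat \<Rightarrow> real) \<Rightarrow> (nat \<Rightarrow> nat \<Rightarrow> real) \<Rightarrow> ereal \<Rightarrow> real" where
  "Fhat n V p = (\<lambda>t. (\<Sum>j=1..n. p (n+1) j * delta_cdf (ereal (V j)) t) + p (n+1) (n+1) * delta_cdf \<infinity> t)"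

definition Gamma :: "nat \<Rightarrow> (nat \<Rightarrow> nat \<Rightarrow> real) \<Rightarrow> real set" where
  "Gamma n p = {(\<Sum>k\<in>I. p i k) | i I. i \<in> {1..n+1} \<and> I \<subseteq> {1..n+1}}"

definition cov_frac :: "nat \<Rightarrow> (nat \<Rightarrow> real) \<Rightarrow> (nat \<Rightarrow> nat \<Rightarrow> real) \<Rightarrow> real \<Rightarrow> ereal \<Rightarrow> real" where
  "cov_frac n V p a v = (1 / real (n+1)) *
     ((\<Sum>i=1..n. if ereal (V i) \<le> quantile a (Fi n V p i v) then 1 else 0)
      + (if v \<le> quantile a (Fi n V p (n+1) v) then 1 else 0))"

definition alpha_tilde :: "nat \<Rightarrow> (nat \<Rightarrow> real) \<Rightarrow> (nat \<Rightarrow> nat \<Rightarrow> real) \<Rightarrow> real \<Rightarrow> ereal \<Rightarrow> real" where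
  "alpha_tilde n V p \<alpha> v = Min {a \<in> Gamma n p. cov_frac n V p a v \<ge> \<alpha>}"

definition conf_set :: "nat \<Rightarrow> (nat \<Rightarrow> real) \<Rightarrow> (nat \<Rightarrow> nat \<Rightarrow> real) \<Rightarrow> real \<Rightarrow> real set" where
  "conf_set n V p \<alpha> = {v. ereal v \<le> quantile (alpha_tilde n V p \<alpha> (ereal v)) (Fhat n V p)}"

definition Vbar :: "nat \<Rightarrow> (nat \<Rightarrow> real) \<Rightarrow> nat \<Rightarrow> ereal" where
  "Vbar n V i = (if i = 0 then -\<infinity> else if i \<le> n then ereal (V i) else \<infinity>)"

definition ell :: "nat \<Rightarrow> (nat \<Rightarrow> real) \<Rightarrow> nat \<Rightarrow> nat" where
  "ell n V i = Max (insert 0 {i' \<in> {1..n}. ereal (V i') < Vbar n V i})"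

definition theta :: "nat \<Rightarrow> (nat \<Rightarrow> real) \<Rightarrow> (nat \<Rightarrow> nat \<Rightarrow> real) \<Rightarrow> nat \<Rightarrow> real" where
  "theta n V p i = (\<Sum>j=1..ell n V i. p i j)"

definition theta_t :: "nat \<Rightarrow> (nat \<Rightarrow> real) \<Rightarrow> (nat \<Rightarrow> nat \<Rightarrow> real) \<Rightarrow> nat \<Rightarrow> real" where
  "theta_t n V p i = (\<Sum>j=1..ell n V i. p (n+1) j)"

definition Sfun :: "nat \<Rightarrow> (nat \<Rightarrow> real) \<Rightarrow> (nat \<Rightarrow> nat \<Rightarrow> real) \<Rightarrow> nat \<Rightarrow> real" where
  "Sfun n V p k = (1 / real (n+1)) *
     (\<Sum>i=1..n. if ereal (V i) \<le> quantile (theta_t n V p k) (Fi n V p i (Vbar n V (ell n V k))) then 1 else 0)"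

definition A1 :: "nat \<Rightarrow> (nat \<Rightarrow> real) \<Rightarrow> (nat \<Rightarrow> nat \<Rightarrow> real) \<Rightarrow> nat set" where
  "A1 n V p = {i \<in> {1..n}. p i (n+1) + theta n V p i < theta_t n V p i}"

definition A2 :: "nat \<Rightarrow> (nat \<Rightarrow> real) \<Rightarrow> (nat \<Rightarrow> nat \<Rightarrow> real) \<Rightarrow> nat set" where
  "A2 n V p = {i \<in> {1..n}. theta n V p i \<ge> theta_t n V p i}"

definition A3 :: "nat \<Rightarrow> (nat \<Rightarrow> real) \<Rightarrow> (nat \<Rightarrow> nat \<Rightarrow> real) \<Rightarrow> nat set" where
  "A3 n V p = {i \<in> {1..n}. p i (n+1) + theta n V p i \<ge> theta_t n V p i \<and> theta n V p i < theta_t n V p i}"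

end

theory Submission
  imports Defs
begin


lemma le_quantile_iff: "x \<le> quantile a F \<longleftrightarrow> (\<forall>t. t < x \<longrightarrow> F t < a)"
  unfolding quantile_def by (auto simp: le_Inf_iff not_le) (meson not_le)

lemma quantile_mono: "a \<le> a' \<Longrightarrow> quantile a F \<le> quantile a' F"
  unfolding quantile_def by (rule Inf_superset_mono) auto

lemma sup_cdf:
  fixes y :: "'j \<Rightarrow> ereal" and x z :: ereal
  assumes J: "finite J" and w: "\<forall>j\<in>J. 0 \<le> w j" and c: "0 \<le> c" and x: "x \<noteq> -\<infinity>"
  shows "(\<forall>t. t < x \<longrightarrow> (\<Sum>j\<in>J. w j * delta_cdf (y j) t) + c * delta_cdf z t < a)
     \<longleftrightarrow> (\<Sum>j\<in>{j\<in>J. y j < x}. w j) + (if z < x then c else 0) < a"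
proof
  assume H: "\<forall>t. t < x \<longrightarrow> (\<Sum>j\<in>J. w j * delta_cdf (y j) t) + c * delta_cdf z t < a"
  define M where "M = insert (-\<infinity>) (y ` {j\<in>J. y j < x} \<union> {z'. z' = z \<and> z < x})"
  have fM: "finite M" using J unfolding M_def by auto
  define t0 where "t0 = Max M"
  have "t0 \<in> M" unfolding t0_def using fM by (intro Max_in) (auto simp: M_def)
  hence t0x: "t0 < x" using x unfolding M_def by (auto simp: ereal_MInfty_lessI)
  have ge: "m \<in> M \<Longrightarrow> m \<le> t0" for m unfolding t0_def using fM by simp
  have 1: "(\<Sum>j\<in>J. w j * delta_cdf (y j) t0) = (\<Sum>j\<in>J. if y j < x then w j else 0)"
  proof (rule sum.cong)
    fix j assume "j \<in> J"
    show "w j * delta_cdf (y j) t0 = (if y j < x then w j else 0)"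
    proof (cases "y j < x")
      case True
      then have "y j \<le> t0" using ge[of "y j"] \<open>j \<in> J\<close> by (auto simp: M_def)
      then show ?thesis using True by (simp add: delta_cdf_def)
    next
      case False
      then have "\<not> y j \<le> t0" using t0x by auto
      then show ?thesis using False by (simp add: delta_cdf_def)
    qed
  qed simp
  have 2: "c * delta_cdf z t0 = (if z < x then c else 0)"
  proof (cases "z < x")
    case True
    then have "z \<le> t0" using ge[of z] by (auto simp: M_def)
    then show ?thesis using True by (simp add: delta_cdf_def)
  next
    case False
    then have "\<not> z \<le> t0" using t0x by auto
    then show ?thesis using False by (simp add: delta_cdf_def)
  qed
  have "(\<Sum>j\<in>J. if y j < x then w j else 0) = (\<Sum>j\<in>{j\<in>J. y j < x}. w j)"
    using J by (simp add: sum.inter_filter)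
  then show "(\<Sum>j\<in>{j\<in>J. y j < x}. w j) + (if z < x then c else 0) < a"
  proof -
    have "(\<Sum>j\<in>J. w j * delta_cdf (y j) t0) + c * delta_cdf z t0 < a" using H t0x by blast
    then show ?thesis unfolding 1 2 \<open>(\<Sum>j\<in>J. if y j < x then w j else 0) = _\<close> .
  qed
next
  assume H: "(\<Sum>j\<in>{j\<in>J. y j < x}. w j) + (if z < x then c else 0) < a"
  show "\<forall>t. t < x \<longrightarrow> (\<Sum>j\<in>J. w j * delta_cdf (y j) t) + c * delta_cdf z t < a"
  proof (intro allI impI)
    fix t assume tx: "t < x"
    have "(\<Sum>j\<in>J. w j * delta_cdf (y j) t) = (\<Sum>j\<in>{j\<in>J. y j \<le> t}. w j)"
      using J by (simp add: sum.inter_filter delta_cdf_def if_distrib cong: if_cong)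
    also have "\<dots> \<le> (\<Sum>j\<in>{j\<in>J. y j < x}. w j)"
      using J w tx by (intro sum_mono2) auto
    finally have a: "(\<Sum>j\<in>J. w j * delta_cdf (y j) t) \<le> (\<Sum>j\<in>{j\<in>J. y j < x}. w j)" .
    have b: "c * delta_cdf z t \<le> (if z < x then c else 0)"
      using c tx by (auto simp: delta_cdf_def)
    show "(\<Sum>j\<in>J. w j * delta_cdf (y j) t) + c * delta_cdf z t < a"
      using a b H by linarith
  qed
qed


locale setting =
  fixes n :: nat and V :: "nat \<Rightarrow> real" and p :: "nat \<Rightarrow> nat \<Rightarrow> real"
  assumes monoV: "mono_on {1..n} V"
    and pnn: "\<And>i j. 0 \<le> p i j"
    and pdiag: "\<And>i. i \<in> {1..n+1} \<Longrightarrow> 0 < p i i"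
    and psum: "\<And>i. i \<in> {1..n+1} \<Longrightarrow> (\<Sum>j=1..n+1. p i j) = 1"
begin

definition Lx :: "ereal \<Rightarrow> nat" where
  "Lx x = Max (insert 0 {i\<in>{1..n}. ereal (V i) < x})"

lemma Lx_props: "{j\<in>{1..n}. ereal (V j) < x} = {1..Lx x} \<and> Lx x \<le> n"
proof (cases "{j\<in>{1..n}. ereal (V j) < x} = {}")
  case True
  have e: "Lx x = 0" unfolding Lx_def True by simp
  show ?thesis using True e by simp
next
  case False
  let ?A = "{j\<in>{1..n}. ereal (V j) < x}"
  have fin: "finite ?A" by simp
  have MA: "Max ?A \<in> ?A" using False fin by (intro Max_in) auto
  have eq: "Lx x = Max ?A" unfolding Lx_def using False fin MA
    by (subst Max_insert) auto
  have "?A = {1..Max ?A}"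
  proof
    show "?A \<subseteq> {1..Max ?A}" using fin by auto
    show "{1..Max ?A} \<subseteq> ?A"
    proof
      fix j assume j: "j \<in> {1..Max ?A}"
      have "V j \<le> V (Max ?A)" using MA j monoV by (auto intro: mono_onD)
      then have "ereal (V j) < x"
        using MA order.strict_trans1[of "ereal (V j)" "ereal (V (Max ?A))" x] by auto
      then show "j \<in> ?A" using MA j by auto
    qed
  qed
  then show ?thesis using eq MA by auto
qed

lemma Lx_set: "{j\<in>{1..n}. ereal (V j) < x} = {1..Lx x}" and Lx_le: "Lx x \<le> n"
  using Lx_props by auto

lemma Lx_mono: assumes "x \<le> y" shows "Lx x \<le> Lx y"
proof -
  have "{j\<in>{1..n}. ereal (V j) < x} \<subseteq> {j\<in>{1..n}. ereal (V j) < y}"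
    using assms by (auto intro: less_le_trans)
  then have sub: "{1..Lx x} \<subseteq> {1..Lx y}" unfolding Lx_set .
  show ?thesis
  proof (cases "Lx x = 0")
    case False
    then have "Lx x \<in> {1..Lx x}" by simp
    then have "Lx x \<in> {1..Lx y}" using sub by blast
    then show ?thesis by simp
  qed simp
qed

lemma ell_Lx: "ell n V k = Lx (Vbar n V k)"
  unfolding ell_def Lx_def by simp

lemma Vbar_in: "i \<in> {1..n} \<Longrightarrow> Vbar n V i = ereal (V i)"
  unfolding Vbar_def by auto

lemma ell_set: "i \<in> {1..n} \<Longrightarrow> {j\<in>{1..n}. V j < V i} = {1..ell n V i}"
  using Lx_set[of "ereal (V i)"] by (simp add: ell_Lx Vbar_in)

lemma ell_less: assumes "i \<in> {1..n}" shows "ell n V i < i"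
proof (rule ccontr)
  assume "\<not> ell n V i < i"
  then have "ell n V i \<in> {1..ell n V i}" using assms by auto
  then have "ell n V i \<in> {1..n} \<and> V (ell n V i) < V i" using ell_set[OF assms] by blast
  moreover have "V i \<le> V (ell n V i)"
    by (rule mono_onD[OF monoV]) (use \<open>\<not> ell n V i < i\<close> assms calculation in auto)
  ultimately show False by simp
qed

lemma ell_le: "ell n V k \<le> n" by (simp add: ell_Lx Lx_le)

definition tau :: "nat \<Rightarrow> real" where "tau L = (\<Sum>j=1..L. p (n+1) j)"

lemma tau_mono: "L \<le> L' \<Longrightarrow> tau L \<le> tau L'"
  unfolding tau_def by (rule sum_mono2) (auto simp: pnn)

lemma theta_t_tau: "theta_t n V p k = tau (ell n V k)"
  unfolding theta_t_def tau_def ..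

lemma Vbar_ell_less: assumes i: "i \<in> {1..n}"
  shows "Vbar n V (ell n V k) < ereal (V i) \<longleftrightarrow> ell n V k \<le> ell n V i"
proof (cases "ell n V k = 0")
  case True then show ?thesis by (simp add: Vbar_def)
next
  case False
  then have k: "ell n V k \<in> {1..n}" using ell_le[of k] by auto
  have "Vbar n V (ell n V k) < ereal (V i) \<longleftrightarrow> ell n V k \<in> {j\<in>{1..n}. V j < V i}"
    using k by (simp add: Vbar_in)
  also have "\<dots> \<longleftrightarrow> ell n V k \<le> ell n V i" using ell_set[OF i] k by auto
  finally show ?thesis .
qed

lemma ind_Fi: assumes i: "i \<in> {1..n}" and z: "True"
  shows "ereal (V i) \<le> quantile a (Fi n V p i z) \<longleftrightarrow>
     theta n V p i + (if z < ereal (V i) then p i (n+1) else 0) < a"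
proof -
  have "ereal (V i) \<le> quantile a (Fi n V p i z) \<longleftrightarrow>
     (\<Sum>j\<in>{j\<in>{1..n}. ereal (V j) < ereal (V i)}. p i j) + (if z < ereal (V i) then p i (n+1) else 0) < a"
    unfolding le_quantile_iff Fi_def
    by (rule sup_cdf[where y = "\<lambda>j. ereal (V j)"]) (auto simp: pnn)
  also have "{j\<in>{1..n}. ereal (V j) < ereal (V i)} = {1..ell n V i}"
    using ell_set[OF i] by simp
  finally show ?thesis unfolding theta_def .
qed

lemma ind_last: "ereal v \<le> quantile a (Fi n V p (n+1) (ereal v)) \<longleftrightarrow> tau (Lx (ereal v)) < a"
proof -
  have "ereal v \<le> quantile a (Fi n V p (n+1) (ereal v)) \<longleftrightarrow>
     (\<Sum>j\<in>{j\<in>{1..n}. ereal (V j) < ereal v}. p (n+1) j) + (if ereal v < ereal v then p (n+1) (n+1) else 0) < a"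
    unfolding le_quantile_iff Fi_def
    by (rule sup_cdf[where y = "\<lambda>j. ereal (V j)"]) (auto simp: pnn)
  then show ?thesis unfolding Lx_set tau_def by simp
qed

lemma ind_Fhat: "ereal v \<le> quantile a (Fhat n V p) \<longleftrightarrow> tau (Lx (ereal v)) < a"
proof -
  have "ereal v \<le> quantile a (Fhat n V p) \<longleftrightarrow>
     (\<Sum>j\<in>{j\<in>{1..n}. ereal (V j) < ereal v}. p (n+1) j) + (if \<infinity> < ereal v then p (n+1) (n+1) else 0) < a"
    unfolding le_quantile_iff Fhat_def
    by (rule sup_cdf[where y = "\<lambda>j. ereal (V j)"]) (auto simp: pnn)
  then show ?thesis unfolding Lx_set tau_def by simp
qed

end


context setting begin

definition R :: "nat \<Rightarrow> real" where
  "R L = (1 / real (n+1)) * (\<Sum>i=1..n. if theta n V p i + (if L \<le> ell n V i then p i (n+1) else 0) < tau L then 1 else 0)"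

definition T :: "real \<Rightarrow> real" where
  "T v = (1 / real (n+1)) * (\<Sum>i=1..n. if theta n V p i + (if ereal v < ereal (V i) then p i (n+1) else 0) < tau (Lx (ereal v)) then 1 else 0)"

lemma S_R: "Sfun n V p k = R (ell n V k)"
  unfolding Sfun_def R_def theta_t_tau
  by (intro arg_cong[where f = "\<lambda>x. _ * x"] sum.cong refl) (simp add: ind_Fi Vbar_ell_less)

lemma cov_T: "cov_frac n V p (tau (Lx (ereal v))) (ereal v) = T v"
  unfolding cov_frac_def T_def ind_last
  by (simp add: ind_Fi)

lemma R_mono: assumes "L \<le> L'" shows "R L \<le> R L'"
  unfolding R_def
proof (intro mult_left_mono sum_mono)
  fix i
  have "tau L \<le> tau L'" using tau_mono[OF assms] .
  moreover have "(if L' \<le> ell n V i then p i (n+1) else 0) \<le> (if L \<le> ell n V i then p i (n+1) else 0)"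
    using assms pnn[of i "n+1"] by auto
  ultimately show "(if theta n V p i + (if L \<le> ell n V i then p i (n+1) else 0) < tau L then 1 else 0)
     \<le> (if theta n V p i + (if L' \<le> ell n V i then p i (n+1) else 0) < tau L' then (1::real) else 0)"
    by auto
qed simp

lemma T_ge_R: "R (Lx (ereal v)) \<le> T v"
  unfolding R_def T_def
proof (intro mult_left_mono sum_mono)
  fix i assume i: "i \<in> {1..n}"
  have "ereal v < ereal (V i) \<Longrightarrow> Lx (ereal v) \<le> ell n V i"
    using Lx_mono[of "ereal v" "ereal (V i)"] by (simp add: ell_Lx Vbar_in[OF i])
  then have "(if ereal v < ereal (V i) then p i (n+1) else 0) \<le> (if Lx (ereal v) \<le> ell n V i then p i (n+1) else 0)"
    using pnn[of i "n+1"] by auto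
  then show "(if theta n V p i + (if Lx (ereal v) \<le> ell n V i then p i (n+1) else 0) < tau (Lx (ereal v)) then 1 else 0)
     \<le> (if theta n V p i + (if ereal v < ereal (V i) then p i (n+1) else 0) < tau (Lx (ereal v)) then (1::real) else 0)"
    by auto
qed simp

lemma T_eq_R: assumes v: "v \<notin> V ` {1..n}" shows "T v = R (Lx (ereal v))"
  unfolding R_def T_def
proof (intro arg_cong[where f = "\<lambda>x. _ * x"] sum.cong refl)
  fix i assume i: "i \<in> {1..n}"
  have 1: "ereal v < ereal (V i) \<Longrightarrow> Lx (ereal v) \<le> ell n V i"
    using Lx_mono[of "ereal v" "ereal (V i)"] by (simp add: ell_Lx Vbar_in[OF i])
  have 2: "v < V i" if "Lx (ereal v) \<le> ell n V i"
  proof (rule ccontr)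
    assume "\<not> v < V i"
    then have "V i < v" using v i by (cases "V i = v") auto
    then have "i \<in> {j\<in>{1..n}. ereal (V j) < ereal v}" using i by auto
    then have "i \<le> Lx (ereal v)" unfolding Lx_set by auto
    then show False using that ell_less[OF i] by simp
  qed
  show "(if theta n V p i + (if ereal v < ereal (V i) then p i (n+1) else 0) < tau (Lx (ereal v)) then 1 else 0)
     = (if theta n V p i + (if Lx (ereal v) \<le> ell n V i then p i (n+1) else 0) < tau (Lx (ereal v)) then (1::real) else 0)"
    using 1 2 by auto
qed

lemma Gamma_fin: "finite (Gamma n p)"
proof -
  have "Gamma n p = (\<lambda>(i, I). \<Sum>k\<in>I. p i k) ` ({1..n+1} \<times> Pow {1..n+1})"
    unfolding Gamma_def by force
  then show ?thesis by simp
qed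

lemma tau_in_Gamma: "tau (Lx x) \<in> Gamma n p"
  unfolding Gamma_def tau_def using Lx_le[of x]
  by (intro CollectI exI[of _ "n+1"] exI[of _ "{1..Lx x}"]) auto

lemma one_in_Gamma: "1 \<in> Gamma n p"
  unfolding Gamma_def using psum[of 1]
  by (intro CollectI exI[of _ 1] exI[of _ "{1..n+1}"]) auto

lemma cov_mono: assumes "a \<le> a'" shows "cov_frac n V p a z \<le> cov_frac n V p a' z"
  unfolding cov_frac_def
proof (intro mult_left_mono add_mono sum_mono)
  fix i
  have "quantile a (Fi n V p i z) \<le> quantile a' (Fi n V p i z)" by (rule quantile_mono[OF assms])
  then show "(if ereal (V i) \<le> quantile a (Fi n V p i z) then 1 else 0)
    \<le> (if ereal (V i) \<le> quantile a' (Fi n V p i z) then (1::real) else 0)" by auto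
next
  have "quantile a (Fi n V p (n+1) z) \<le> quantile a' (Fi n V p (n+1) z)" by (rule quantile_mono[OF assms])
  then show "(if z \<le> quantile a (Fi n V p (n+1) z) then 1 else 0)
    \<le> (if z \<le> quantile a' (Fi n V p (n+1) z) then (1::real) else 0)" by auto
qed simp

lemma cov_one: "cov_frac n V p 1 (ereal v) = 1"
proof -
  have A: "theta n V p i + (if ereal v < ereal (V i) then p i (n+1) else 0) < 1" if i: "i \<in> {1..n}" for i
  proof -
    have li: "ell n V i < i" using ell_less[OF i] .
    have d: "{1..ell n V i} \<inter> {i, n+1} = {}" using li ell_le[of i] by auto
    have "theta n V p i + p i i + p i (n+1) = (\<Sum>j\<in>{1..ell n V i} \<union> {i, n+1}. p i j)"
      unfolding theta_def using d i by (subst sum.union_disjoint) auto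
    also have "\<dots> \<le> (\<Sum>j=1..n+1. p i j)" using li i ell_le[of i] by (intro sum_mono2) (auto simp: pnn)
    also have "\<dots> = 1" using psum i by auto
    finally show ?thesis using pdiag[of i] i pnn[of i "n+1"] by auto
  qed
  have B: "tau (Lx (ereal v)) < 1"
  proof -
    have "tau (Lx (ereal v)) + p (n+1) (n+1) = (\<Sum>j\<in>{1..Lx (ereal v)} \<union> {n+1}. p (n+1) j)"
      unfolding tau_def using Lx_le[of "ereal v"] by (subst sum.union_disjoint) auto
    also have "\<dots> \<le> (\<Sum>j=1..n+1. p (n+1) j)" using Lx_le[of "ereal v"] by (intro sum_mono2) (auto simp: pnn)
    also have "\<dots> = 1" using psum by auto
    finally show ?thesis using pdiag[of "n+1"] by auto
  qed
  show ?thesis unfolding cov_frac_def ind_last using A B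
    by (simp add: ind_Fi)
qed

lemma conf_iff: assumes "\<alpha> \<le> 1" shows "v \<in> conf_set n V p \<alpha> \<longleftrightarrow> T v < \<alpha>"
proof -
  define Sv where "Sv = {a \<in> Gamma n p. cov_frac n V p a (ereal v) \<ge> \<alpha>}"
  have fin: "finite Sv" unfolding Sv_def using Gamma_fin by simp
  have ne: "1 \<in> Sv" unfolding Sv_def using one_in_Gamma cov_one assms by simp
  have at: "alpha_tilde n V p \<alpha> (ereal v) = Min Sv" unfolding alpha_tilde_def Sv_def ..
  have "v \<in> conf_set n V p \<alpha> \<longleftrightarrow> tau (Lx (ereal v)) < Min Sv"
    by (simp add: conf_set_def at ind_Fhat)
  also have "\<dots> \<longleftrightarrow> T v < \<alpha>"
  proof
    assume "tau (Lx (ereal v)) < Min Sv"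
    then have "tau (Lx (ereal v)) \<notin> Sv" using fin Min_le by fastforce
    then show "T v < \<alpha>" using tau_in_Gamma cov_T unfolding Sv_def by fastforce
  next
    assume Tv: "T v < \<alpha>"
    have "Min Sv \<in> Sv" using fin ne by (intro Min_in) auto
    moreover have "a \<in> Sv \<Longrightarrow> tau (Lx (ereal v)) < a" for a
    proof (rule ccontr)
      assume a: "a \<in> Sv" "\<not> tau (Lx (ereal v)) < a"
      then have "cov_frac n V p a (ereal v) \<le> cov_frac n V p (tau (Lx (ereal v))) (ereal v)"
        by (intro cov_mono) simp
      then show False using a Tv cov_T unfolding Sv_def by simp
    qed
    ultimately show "tau (Lx (ereal v)) < Min Sv" by blast
  qed
  finally show ?thesis .
qed

end


lemma case_arith:
  fixes th P tk ti :: real and b c :: bool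
  assumes "P \<ge> 0" "b \<Longrightarrow> tk \<le> ti" "\<not> b \<Longrightarrow> ti \<le> tk" "c \<longleftrightarrow> \<not> b"
  shows "(if th + (if b then P else 0) < tk then 1 else 0) =
    (if P + th < ti then (if th + P < tk then 1 else 0) else 0) + (if th \<ge> ti then (if th < tk then 1 else 0) else 0)
    + (if P + th \<ge> ti \<and> th < ti then (if c then 1 else 0) else (0::real))"
  using assms by (cases b; cases "P + th < ti"; cases "ti \<le> th"; cases "th < tk"; cases "th + P < tk") simp_all

lemma sum_restrict_sub: "A \<subseteq> B \<Longrightarrow> finite B \<Longrightarrow> sum g A = (\<Sum>i\<in>B. if i \<in> A then g i else 0)"
  by (simp add: sum.inter_restrict[symmetric] Int_absorb1)

context setting begin

lemma ell_succ: assumes "L \<le> n" shows "ell n V (L+1) \<le> L"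
proof (cases "ell n V (L+1) = 0")
  case False
  let ?j = "ell n V (L+1)"
  have "?j \<in> {1..?j}" using False by simp
  then have j: "?j \<in> {1..n} \<and> ereal (V ?j) < Vbar n V (L+1)"
    using Lx_set[of "Vbar n V (L+1)"] unfolding ell_Lx by blast
  show ?thesis
  proof (cases "L + 1 \<le> n")
    case True
    then have "V ?j < V (L+1)" using j by (simp add: Vbar_def)
    moreover have "L + 1 \<le> ?j \<Longrightarrow> V (L+1) \<le> V ?j"
      using j True by (intro mono_onD[OF monoV]) auto
    ultimately show ?thesis by linarith
  next
    case False
    then show ?thesis using assms j by auto
  qed
qed simp

lemma part1:
  assumes a1: "\<alpha> \<le> 1" and ks: "ks \<in> {1..n+1}" and Sks: "Sfun n V p ks < \<alpha>"
    and maxk: "\<forall>k\<in>{1..n+1}. Sfun n V p k < \<alpha> \<longrightarrow> k \<le> ks"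
  shows "closure (conf_set n V p \<alpha>) = {v. ereal v \<le> Vbar n V ks}"
proof
  let ?b = "Vbar n V ks"
  have closedS: "closed {v. ereal v \<le> ?b}"
  proof (cases "ks \<le> n")
    case True
    then have "{v. ereal v \<le> ?b} = atMost (V ks)" using ks by (auto simp: Vbar_def)
    then show ?thesis by simp
  next
    case False
    then have "{v. ereal v \<le> ?b} = UNIV" using ks by (auto simp: Vbar_def)
    then show ?thesis by simp
  qed
  have "conf_set n V p \<alpha> \<subseteq> {v. ereal v \<le> ?b}"
  proof
    fix v assume "v \<in> conf_set n V p \<alpha>"
    then have Tv: "T v < \<alpha>" using conf_iff[OF a1] by simp
    show "v \<in> {v. ereal v \<le> ?b}"
    proof (rule ccontr)
      assume "v \<notin> {v. ereal v \<le> ?b}"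
      then have lt: "?b < ereal v" by auto
      then have ksn: "ks \<le> n" using ks by (cases "ks \<le> n") (auto simp: Vbar_def)
      then have "V ks < v" using lt ks by (simp add: Vbar_def)
      then have "ks \<in> {j\<in>{1..n}. ereal (V j) < ereal v}" using ks ksn by auto
      then have ksL: "ks \<le> Lx (ereal v)" unfolding Lx_set by auto
      define L where "L = Lx (ereal v)"
      have Ln: "L \<le> n" unfolding L_def by (rule Lx_le)
      have "\<not> Sfun n V p (L+1) < \<alpha>" using maxk ksL Ln unfolding L_def by auto
      moreover have "Sfun n V p (L+1) \<le> T v"
        unfolding S_R using R_mono[OF ell_succ[OF Ln]] T_ge_R[of v] unfolding L_def by linarith
      ultimately show False using Tv by linarith
    qed
  qed
  then show "closure (conf_set n V p \<alpha>) \<subseteq> {v. ereal v \<le> ?b}"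
    using closedS by (rule closure_minimal)
next
  let ?b = "Vbar n V ks"
  let ?D = "{v. ereal v < ?b} - V ` {1..n}"
  have "?D \<subseteq> conf_set n V p \<alpha>"
  proof
    fix v assume v: "v \<in> ?D"
    have "Lx (ereal v) \<le> ell n V ks" unfolding ell_Lx using v by (intro Lx_mono) auto
    then have "T v \<le> Sfun n V p ks" using T_eq_R[of v] v R_mono unfolding S_R by auto
    then show "v \<in> conf_set n V p \<alpha>" using conf_iff[OF a1] Sks by simp
  qed
  then have cl: "closure ?D \<subseteq> closure (conf_set n V p \<alpha>)" by (rule closure_mono)
  have "{v. ereal v \<le> ?b} \<subseteq> closure ?D"
  proof
    fix v assume v: "v \<in> {v. ereal v \<le> ?b}"
    show "v \<in> closure ?D"
      unfolding closure_approachable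
    proof (intro allI impI)
      fix e :: real assume e: "e > 0"
      have "infinite ({v-e<..<v} - V ` {1..n})"
        using e by (intro Diff_infinite_finite) auto
      then obtain y where y: "y \<in> {v-e<..<v} - V ` {1..n}"
        using infinite_imp_nonempty by blast
      then have yv: "ereal y < ereal v" by auto
      have vb: "ereal v \<le> ?b" using v by simp
      have "ereal y < ?b" using yv vb by (rule less_le_trans)
      then have "y \<in> ?D" using y by auto
      moreover have "dist y v < e" using y by (auto simp: dist_real_def)
      ultimately show "\<exists>y\<in>?D. dist y v < e" by blast
    qed
  qed
  then show "{v. ereal v \<le> ?b} \<subseteq> closure (conf_set n V p \<alpha>)" using cl by blast
qed

lemma part2:
  shows "Sfun n V p k = (1 / real (n+1)) *
           ((\<Sum>i\<in>A1 n V p.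
               if theta n V p i + p i (n+1) < theta_t n V p k then 1 else 0)
          + (\<Sum>i\<in>A2 n V p.
               if theta n V p i < theta_t n V p k then 1 else 0)
          + (\<Sum>i\<in>A3 n V p.
               if ell n V i < ell n V k then 1 else 0))"
proof -
  let ?g1 = "\<lambda>i. if theta n V p i + p i (n+1) < theta_t n V p k then 1 else (0::real)"
  let ?g2 = "\<lambda>i. if theta n V p i < theta_t n V p k then 1 else (0::real)"
  let ?g3 = "\<lambda>i. if ell n V i < ell n V k then 1 else (0::real)"
  have s1: "A1 n V p \<subseteq> {1..n}" "A2 n V p \<subseteq> {1..n}" "A3 n V p \<subseteq> {1..n}"
    unfolding A1_def A2_def A3_def by auto
  have "(\<Sum>i=1..n. if theta n V p i + (if ell n V k \<le> ell n V i then p i (n+1) else 0) < tau (ell n V k) then 1 else (0::real))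
     = (\<Sum>i=1..n. (if i \<in> A1 n V p then ?g1 i else 0) + (if i \<in> A2 n V p then ?g2 i else 0) + (if i \<in> A3 n V p then ?g3 i else 0))"
  proof (rule sum.cong[OF refl])
    fix i assume i: "i \<in> {1..n}"
    have m1: "ell n V k \<le> ell n V i \<Longrightarrow> tau (ell n V k) \<le> tau (ell n V i)" by (rule tau_mono)
    have m2: "ell n V i < ell n V k \<Longrightarrow> tau (ell n V i) \<le> tau (ell n V k)" by (rule tau_mono) simp
    have P: "0 \<le> p i (n+1)" by (rule pnn)
    show "(if theta n V p i + (if ell n V k \<le> ell n V i then p i (n+1) else 0) < tau (ell n V k) then 1 else (0::real))
       = (if i \<in> A1 n V p then ?g1 i else 0) + (if i \<in> A2 n V p then ?g2 i else 0) + (if i \<in> A3 n V p then ?g3 i else 0)"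
    proof -
      have e: "(i \<in> A1 n V p) = (p i (n+1) + theta n V p i < tau (ell n V i))"
        "(i \<in> A2 n V p) = (theta n V p i \<ge> tau (ell n V i))"
        "(i \<in> A3 n V p) = (p i (n+1) + theta n V p i \<ge> tau (ell n V i) \<and> theta n V p i < tau (ell n V i))"
        using i unfolding A1_def A2_def A3_def theta_t_tau by auto
      show ?thesis unfolding e theta_t_tau
        by (rule case_arith[OF P m1 m2]) auto
    qed
  qed
  also have "\<dots> = sum ?g1 (A1 n V p) + sum ?g2 (A2 n V p) + sum ?g3 (A3 n V p)"
  proof -
    have h1: "sum ?g1 (A1 n V p) = (\<Sum>i=1..n. if i \<in> A1 n V p then ?g1 i else 0)"
      by (rule sum_restrict_sub[OF s1(1)]) simp
    have h2: "sum ?g2 (A2 n V p) = (\<Sum>i=1..n. if i \<in> A2 n V p then ?g2 i else 0)"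
      by (rule sum_restrict_sub[OF s1(2)]) simp
    have h3: "sum ?g3 (A3 n V p) = (\<Sum>i=1..n. if i \<in> A3 n V p then ?g3 i else 0)"
      by (rule sum_restrict_sub[OF s1(3)]) simp
    show ?thesis unfolding h1 h2 h3 sum.distrib ..
  qed
  finally have X: "(\<Sum>i=1..n. if theta n V p i + (if ell n V k \<le> ell n V i then p i (n+1) else 0) < tau (ell n V k) then 1 else (0::real))
     = sum ?g1 (A1 n V p) + sum ?g2 (A2 n V p) + sum ?g3 (A3 n V p)" .
  show ?thesis unfolding S_R R_def X ..
qed

end


theorem lemma2:
  fixes n :: nat and V :: "nat \<Rightarrow> real" and X :: "nat \<Rightarrow> real^'p"
    and H :: "real^'p \<Rightarrow> real^'p \<Rightarrow> real" and \<alpha> :: real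
  assumes sorted: "mono_on {1..n} V"
    and H_range: "\<forall>x y. 0 \<le> H x y \<and> H x y \<le> 1"
    and H_diag: "\<forall>x. H x x = 1"
    and alpha: "0 < \<alpha>" "\<alpha> < 1"
  shows "(\<forall>kstar. kstar \<in> {1..n+1} \<and> Sfun n V (pH n H X) kstar < \<alpha>
            \<and> (\<forall>k\<in>{1..n+1}. Sfun n V (pH n H X) k < \<alpha> \<longrightarrow> k \<le> kstar)
          \<longrightarrow> closure (conf_set n V (pH n H X) \<alpha>) = {v. ereal v \<le> Vbar n V kstar})
       \<and> (\<forall>k\<in>{1..n+1}. Sfun n V (pH n H X) k = (1 / real (n+1)) *
           ((\<Sum>i\<in>A1 n V (pH n H X).
               if theta n V (pH n H X) i + pH n H X i (n+1) < theta_t n V (pH n H X) k then 1 else 0)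
          + (\<Sum>i\<in>A2 n V (pH n H X).
               if theta n V (pH n H X) i < theta_t n V (pH n H X) k then 1 else 0)
          + (\<Sum>i\<in>A3 n V (pH n H X).
               if ell n V i < ell n V k then 1 else 0)))"
proof -
  let ?p = "pH n H X"
  have pnn: "0 \<le> ?p i j" for i j
    unfolding pH_def
  proof (rule divide_nonneg_nonneg)
    show "0 \<le> H (X i) (X j)" using H_range by simp
    show "0 \<le> (\<Sum>k=1..n+1. H (X i) (X k))" by (rule sum_nonneg) (use H_range in simp)
  qed
  have den: "1 \<le> (\<Sum>k=1..n+1. H (X i) (X k))" if i: "i \<in> {1..n+1}" for i
  proof -
    have "H (X i) (X i) \<le> (\<Sum>k=1..n+1. H (X i) (X k))"
      by (rule member_le_sum[of i "{1..n+1}" "\<lambda>k. H (X i) (X k)"]) (use i H_range in auto)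
    then show ?thesis using H_diag by simp
  qed
  have pdiag: "0 < ?p i i" if "i \<in> {1..n+1}" for i
    unfolding pH_def using den[OF that] H_diag by simp
  have psum: "(\<Sum>j=1..n+1. ?p i j) = 1" if "i \<in> {1..n+1}" for i
  proof -
    have "(\<Sum>j=1..n+1. ?p i j) = (\<Sum>j=1..n+1. H (X i) (X j)) / (\<Sum>k=1..n+1. H (X i) (X k))"
      unfolding pH_def by (rule sum_divide_distrib[symmetric])
    then show ?thesis using den[OF that] by simp
  qed
  interpret S: setting n V ?p
    by unfold_locales (use sorted pnn pdiag psum in auto)
  show ?thesis using S.part1[OF less_imp_le[OF alpha(2)]] S.part2 by blast
qed

end
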